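(* Let $1\le d_1\le d_2$ and let $G=(V,E)$ be a finite connected undirected unweighted $(d_1,d_2)$-bidegreed graph. Then for every $\lambda\in[0,1]$ and every $S_0\subseteq V$, \[\mathrm{fp}^{\lambda,1}_G(S_0)=\frac{\sum_{v\in S_0}f(\deg_v)}{\sum_{v\in V}f(\deg_v)},\qquad f(d_1)=1,\quad f(d_2)=\frac{\lambda d_1+(1-\lambda)d_2}{\lambda d_2+(1-\lambda)d_1}.\]
   Context: A graph is $(d_1,d_2)$-bidegreed, $d_1\le d_2$, if every vertex has degree in $\{d_1,d_2\}$; $\deg_v$ is the degree of $v$. The $\lambda$-mixed Moran process on a connected graph $G=(V,E)$ with $n=|V|\ge 2$: each vertex hosts a resident (fitness $1$) or mutant (fitness $r>0$); the state is the mutant set $S_t\subseteq V$. Each step, independently: with probability $\lambda$ a Birth-death step (a vertex $u$ chosen with probability proportional to fitness among all vertices; a uniformly random neighbor of $u$ takes $u$'s type); with probability $1-\lambda$ a death-Birth step (a uniformly random vertex $v$ dies; a neighbor $u$ of $v$ chosen with probability proportional to fitness among the neighbors of $v$; $v$ takes $u$'s type). $\mathrm{fp}^{\lambda,r}_G(S_0)$ is the probability of reaching $S_t=V$ from $S_0$. *)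

theory Defs
  imports Complex_Main
begin

definition nbrs :: "'a set \<Rightarrow> ('a \<Rightarrow> 'a \<Rightarrow> bool) \<Rightarrow> 'a \<Rightarrow> 'a set" where
  "nbrs V E v = {u \<in> V. E v u}"

definition deg :: "'a set \<Rightarrow> ('a \<Rightarrow> 'a \<Rightarrow> bool) \<Rightarrow> 'a \<Rightarrow> nat" where
  "deg V E v = card (nbrs V E v)"

definition simple_graph :: "'a set \<Rightarrow> ('a \<Rightarrow> 'a \<Rightarrow> bool) \<Rightarrow> bool" where
  "simple_graph V E \<longleftrightarrow> finite V \<and> (\<forall>u v. E u v \<longrightarrow> u \<in> V \<and> v \<in> V)
     \<and> (\<forall>u v. E u v \<longrightarrow> E v u) \<and> (\<forall>u. \<not> E u u)"

definition connected_graph :: "'a set \<Rightarrow> ('a \<Rightarrow> 'a \<Rightarrow> bool) \<Rightarrow> bool" where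
  "connected_graph V E \<longleftrightarrow> V \<noteq> {} \<and>
     (\<forall>u\<in>V. \<forall>v\<in>V. (\<lambda>x y. E x y \<and> x \<in> V \<and> y \<in> V)\<^sup>*\<^sup>* u v)"

definition bidegreed :: "'a set \<Rightarrow> ('a \<Rightarrow> 'a \<Rightarrow> bool) \<Rightarrow> nat \<Rightarrow> nat \<Rightarrow> bool" where
  "bidegreed V E d1 d2 \<longleftrightarrow> d1 \<le> d2 \<and> (\<forall>v\<in>V. deg V E v \<in> {d1, d2})"

text \<open>Fitness of vertex u in state S (mutant set), mutant fitness r.\<close>
definition fit :: "real \<Rightarrow> 'a set \<Rightarrow> 'a \<Rightarrow> real" where
  "fit r S u = (if u \<in> S then r else 1)"

definition take_type :: "'a set \<Rightarrow> 'a \<Rightarrow> 'a \<Rightarrow> 'a set" where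
  "take_type S u v = (if u \<in> S then insert v S else S - {v})"

text \<open>reach_prob V E lam r n S = probability that S_n = V when S_0 = S, for the
  lambda-mixed Moran process (one-step analysis: expectation over the first step).\<close>
fun reach_prob :: "'a set \<Rightarrow> ('a \<Rightarrow> 'a \<Rightarrow> bool) \<Rightarrow> real \<Rightarrow> real \<Rightarrow> nat \<Rightarrow> 'a set \<Rightarrow> real" where
  "reach_prob V E lam r 0 S = (if S = V then 1 else 0)"
| "reach_prob V E lam r (Suc n) S =
     lam * (\<Sum>u\<in>V. fit r S u / (\<Sum>w\<in>V. fit r S w) *
              (\<Sum>v\<in>nbrs V E u. (1 / real (deg V E u)) *
                   reach_prob V E lam r n (take_type S u v)))
   + (1 - lam) * (\<Sum>v\<in>V. (1 / real (card V)) *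
              (\<Sum>u\<in>nbrs V E v. fit r S u / (\<Sum>w\<in>nbrs V E v. fit r S w) *
                   reach_prob V E lam r n (take_type S u v)))"

text \<open>Fixation probability: probability of ever reaching the absorbing state V,
  i.e. the limit of P(S_n = V) (V is absorbing, so this is nondecreasing in n).\<close>
definition fp :: "'a set \<Rightarrow> ('a \<Rightarrow> 'a \<Rightarrow> bool) \<Rightarrow> real \<Rightarrow> real \<Rightarrow> 'a set \<Rightarrow> real" where
  "fp V E lam r S0 = lim (\<lambda>n. reach_prob V E lam r n S0)"

end

theory Submission
  imports Defs
begin

locale mgraph =
  fixes V :: "'a set" and E :: "'a \<Rightarrow> 'a \<Rightarrow> bool" and lam :: real
  assumes sg: "simple_graph V E"
    and degpos: "\<And>v. v \<in> V \<Longrightarrow> deg V E v \<ge> 1"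
    and lam0: "0 \<le> lam" and lam1: "lam \<le> 1"
    and Vne: "V \<noteq> {}"
begin

definition W :: "'a \<Rightarrow> 'a \<Rightarrow> real" where
  "W u v = lam / real (deg V E u) + (1 - lam) / real (deg V E v)"

definition Op :: "('a set \<Rightarrow> real) \<Rightarrow> 'a set \<Rightarrow> real" where
  "Op k S = (1 / real (card V)) * (\<Sum>u\<in>V. \<Sum>v\<in>nbrs V E u. W u v * k (take_type S u v))"

lemma finV: "finite V" using sg by (simp add: simple_graph_def)
lemma symE: "E u v \<Longrightarrow> E v u" using sg by (simp add: simple_graph_def)
lemma EV: "E u v \<Longrightarrow> u \<in> V \<and> v \<in> V" using sg by (simp add: simple_graph_def)
lemma cardpos: "card V > 0" using finV Vne by (simp add: card_gt_0_iff)
lemma fin_nbrs: "finite (nbrs V E u)" using finV by (simp add: nbrs_def)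

lemma swap_nbrs:
  "(\<Sum>v\<in>V. \<Sum>u\<in>nbrs V E v. g u v) = (\<Sum>u\<in>V. \<Sum>v\<in>nbrs V E u. g u v)"
proof -
  have "(\<Sum>v\<in>V. \<Sum>u\<in>nbrs V E v. g u v) = (\<Sum>v\<in>V. \<Sum>u\<in>{u. u \<in> V \<and> E v u}. g u v)"
    by (simp add: nbrs_def)
  also have "\<dots> = (\<Sum>u\<in>V. \<Sum>v\<in>{v. v \<in> V \<and> E v u}. g u v)"
    by (rule sum.swap_restrict[OF finV finV])
  also have "\<dots> = (\<Sum>u\<in>V. \<Sum>v\<in>nbrs V E u. g u v)"
    unfolding nbrs_def by (intro sum.cong refl) (auto dest: symE)
  finally show ?thesis .
qed

lemma step: "reach_prob V E lam 1 (Suc m) S = Op (reach_prob V E lam 1 m) S"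
proof -
  let ?k = "reach_prob V E lam 1 m"
  let ?n = "real (card V)"
  have f1: "\<And>S u. fit 1 S u = 1" by (simp add: fit_def)
  have "reach_prob V E lam 1 (Suc m) S =
     lam * (\<Sum>u\<in>V. \<Sum>v\<in>nbrs V E u. (1/?n) * (1 / real (deg V E u)) * ?k (take_type S u v))
   + (1 - lam) * (\<Sum>v\<in>V. \<Sum>u\<in>nbrs V E v. (1/?n) * (1 / real (deg V E v)) * ?k (take_type S u v))"
    by (simp add: f1 deg_def sum_distrib_left mult.assoc)
  also have "\<dots> = lam * (\<Sum>u\<in>V. \<Sum>v\<in>nbrs V E u. (1/?n) * (1 / real (deg V E u)) * ?k (take_type S u v))
   + (1 - lam) * (\<Sum>u\<in>V. \<Sum>v\<in>nbrs V E u. (1/?n) * (1 / real (deg V E v)) * ?k (take_type S u v))"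
    by (simp only: swap_nbrs[of "\<lambda>u v. (1/?n) * (1 / real (deg V E v)) * ?k (take_type S u v)"])
  also have "\<dots> = Op ?k S"
    unfolding Op_def W_def sum_distrib_left sum.distrib[symmetric]
    by (intro sum.cong refl) (simp add: divide_inverse algebra_simps)
  finally show ?thesis .
qed

declare reach_prob.simps(2)[simp del]

lemma Op_cong: "(\<And>u v. u \<in> V \<Longrightarrow> v \<in> nbrs V E u \<Longrightarrow> k (take_type S u v) = l (take_type S u v))
   \<Longrightarrow> Op k S = Op l S"
  unfolding Op_def by (intro arg_cong2[where f="(*)"] refl sum.cong) auto

lemma sum_inv_deg: "(\<Sum>u\<in>V. \<Sum>v\<in>nbrs V E u. 1 / real (deg V E u)) = real (card V)"
proof -
  have "\<And>v. v \<in> V \<Longrightarrow> (\<Sum>u\<in>nbrs V E v. 1 / real (deg V E v)) = 1"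
  proof -
    fix v assume "v \<in> V"
    then have "card (nbrs V E v) > 0" using degpos[of v] by (simp add: deg_def)
    then show "(\<Sum>u\<in>nbrs V E v. 1 / real (deg V E v)) = 1" by (simp add: deg_def)
  qed
  then have "(\<Sum>u\<in>V. \<Sum>v\<in>nbrs V E u. 1 / real (deg V E u)) = (\<Sum>v\<in>V. (1::real))"
    by (rule sum.cong[OF refl])
  then show ?thesis by simp
qed

lemma sum_inv_deg2: "(\<Sum>u\<in>V. \<Sum>v\<in>nbrs V E u. 1 / real (deg V E v)) = real (card V)"
proof -
  have "(\<Sum>u\<in>V. \<Sum>v\<in>nbrs V E u. 1 / real (deg V E v)) = (\<Sum>v\<in>V. \<Sum>u\<in>nbrs V E v. 1 / real (deg V E v))"
    by (rule swap_nbrs[symmetric])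
  also have "\<dots> = real (card V)" by (rule sum_inv_deg)
  finally show ?thesis .
qed

lemma Op_const: "Op (\<lambda>T. c) S = c"
proof -
  have eq1: "(\<Sum>u\<in>V. \<Sum>v\<in>nbrs V E u. W u v * c) =
     lam * c * (\<Sum>u\<in>V. \<Sum>v\<in>nbrs V E u. 1 / real (deg V E u))
   + (1 - lam) * c * (\<Sum>u\<in>V. \<Sum>v\<in>nbrs V E u. 1 / real (deg V E v))"
    unfolding W_def by (simp add: sum_distrib_left sum.distrib algebra_simps)
  show ?thesis unfolding Op_def eq1 sum_inv_deg sum_inv_deg2 using cardpos
    by (simp add: field_simps)
qed

lemma Op_lin: "Op (\<lambda>T. a * k T + b * l T) S = a * Op k S + b * Op l S"
  unfolding Op_def by (simp add: sum_distrib_left sum.distrib algebra_simps)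

lemma W_nonneg: "u \<in> V \<Longrightarrow> v \<in> V \<Longrightarrow> W u v \<ge> 0"
  unfolding W_def using lam0 lam1 by (intro add_nonneg_nonneg divide_nonneg_nonneg) auto

lemma W_pos: "u \<in> V \<Longrightarrow> v \<in> V \<Longrightarrow> W u v > 0"
proof -
  assume u: "u \<in> V" and v: "v \<in> V"
  have du: "real (deg V E u) > 0" and dv: "real (deg V E v) > 0" using degpos[OF u] degpos[OF v] by auto
  show ?thesis
  proof (cases "lam > 0")
    case True
    then have "lam / real (deg V E u) > 0" using du by simp
    moreover have "(1 - lam) / real (deg V E v) \<ge> 0" using lam1 dv by simp
    ultimately show ?thesis unfolding W_def by linarith
  next
    case False
    then have "(1 - lam) / real (deg V E v) > 0" using dv by simp
    moreover have "lam / real (deg V E u) \<ge> 0" using lam0 du by simp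
    ultimately show ?thesis unfolding W_def by linarith
  qed
qed

lemma tt_sub: assumes "S \<subseteq> V" "v \<in> V" shows "take_type S u v \<subseteq> V"
proof (cases "u \<in> S")
  case True thus ?thesis using assms by (simp add: take_type_def)
next
  case False thus ?thesis using assms by (auto simp: take_type_def)
qed

lemma nbrsV: "v \<in> nbrs V E u \<Longrightarrow> v \<in> V \<and> E u v" by (simp add: nbrs_def)

lemma tt_sub': "S \<subseteq> V \<Longrightarrow> v \<in> nbrs V E u \<Longrightarrow> take_type S u v \<subseteq> V"
  using tt_sub nbrsV by blast

lemma Op_mono: assumes S: "S \<subseteq> V" and kl: "\<And>T. T \<subseteq> V \<Longrightarrow> k T \<le> l T" shows "Op k S \<le> Op l S"
  unfolding Op_def using cardpos
  by (intro mult_left_mono sum_mono mult_left_mono kl tt_sub'[OF S]) (auto intro!: W_nonneg dest: nbrsV EV)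

lemma Op_tendsto: assumes g: "\<And>T. T \<subseteq> V \<Longrightarrow> (\<lambda>m. g m T) \<longlonglongrightarrow> g' T" and S: "S \<subseteq> V" shows
   "(\<lambda>m. Op (g m) S) \<longlonglongrightarrow> Op g' S"
  unfolding Op_def
  by (intro tendsto_intros g tt_sub'[OF S])


lemma Op_diff: "Op (\<lambda>T. k T - l T) S = Op k S - Op l S"
  unfolding Op_def by (simp add: sum_subtractf right_diff_distrib algebra_simps)

lemma Op_scale: "Op (\<lambda>T. c * k T) S = c * Op k S"
  unfolding Op_def by (simp add: sum_distrib_left algebra_simps)

lemma Op_V: "Op k V = k V"
proof -
  have "Op k V = Op (\<lambda>T. k V) V"
    by (rule Op_cong) (auto simp: take_type_def nbrs_def insert_absorb)
  then show ?thesis by (simp add: Op_const)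
qed

lemma Op_empty: "Op k {} = k {}"
proof -
  have "Op k {} = Op (\<lambda>T. k {}) {}"
    by (rule Op_cong) (auto simp: take_type_def)
  then show ?thesis by (simp add: Op_const)
qed

abbreviation a where "a m S \<equiv> reach_prob V E lam 1 m S"

lemma a_V: "a m V = 1"
  by (induction m) (simp_all add: step Op_V)

lemma a_empty: "a m {} = 0"
  using Vne by (induction m) (simp_all add: step Op_empty)

lemma a_bounds: "S \<subseteq> V \<Longrightarrow> 0 \<le> a m S \<and> a m S \<le> 1"
proof (induction m arbitrary: S)
  case 0 then show ?case by simp
next
  case (Suc m)
  have "Op (\<lambda>T. 0) S \<le> Op (a m) S" by (rule Op_mono[OF Suc.prems]) (use Suc.IH in auto)
  moreover have "Op (a m) S \<le> Op (\<lambda>T. 1) S" by (rule Op_mono[OF Suc.prems]) (use Suc.IH in auto)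
  ultimately show ?case by (simp add: step Op_const)
qed

lemma a_mono: "S \<subseteq> V \<Longrightarrow> a m S \<le> a (Suc m) S"
proof (induction m arbitrary: S)
  case 0
  show ?case
  proof (cases "S = V")
    case True then show ?thesis using a_V[of 1] by simp
  next
    case False then show ?thesis using a_bounds[OF 0, of 1] by simp
  qed
next
  case (Suc m)
  have "Op (a m) S \<le> Op (a (Suc m)) S" by (rule Op_mono[OF Suc.prems]) (use Suc.IH in auto)
  moreover have "a (Suc (Suc m)) S = Op (a (Suc m)) S" by (rule step)
  moreover have "a (Suc m) S = Op (a m) S" by (rule step)
  ultimately show ?case by linarith
qed

definition ainf where "ainf S = lim (\<lambda>m. a m S)"

lemma a_lim: assumes S: "S \<subseteq> V" shows "(\<lambda>m. a m S) \<longlonglongrightarrow> ainf S"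
proof -
  have "incseq (\<lambda>m. a m S)" by (rule incseq_SucI) (rule a_mono[OF S])
  moreover have "\<forall>i. a i S \<le> 1" using a_bounds[OF S] by blast
  ultimately obtain L where "(\<lambda>m. a m S) \<longlonglongrightarrow> L" by (rule incseq_convergent)
  then have "convergent (\<lambda>m. a m S)" by (auto simp: convergent_def)
  then show ?thesis unfolding ainf_def by (simp add: convergent_LIMSEQ_iff)
qed

lemma ainf_fix: assumes S: "S \<subseteq> V" shows "ainf S = Op ainf S"
proof -
  have "(\<lambda>m. a (Suc m) S) \<longlonglongrightarrow> ainf S" by (rule LIMSEQ_Suc[OF a_lim[OF S]])
  moreover have "(\<lambda>m. a (Suc m) S) \<longlonglongrightarrow> Op ainf S"
    unfolding step by (rule Op_tendsto[OF a_lim S])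
  ultimately show ?thesis by (rule LIMSEQ_unique)
qed

lemma ainf_V: "ainf V = 1"
  unfolding ainf_def a_V by simp

lemma ainf_empty: "ainf {} = 0"
  unfolding ainf_def a_empty by simp

lemma max_step:
  assumes S: "S \<subseteq> V" and hfix: "h S = Op h S" and le: "\<And>T. T \<subseteq> V \<Longrightarrow> h T \<le> h S"
    and u: "u \<in> S" and v: "v \<in> V" and e: "E u v"
  shows "h (insert v S) = h S"
proof -
  let ?M = "h S"
  have "Op (\<lambda>T. ?M - h T) S = 0" using hfix by (simp add: Op_diff Op_const)
  then have Z: "(\<Sum>x\<in>V. \<Sum>y\<in>nbrs V E x. W x y * (?M - h (take_type S x y))) = 0"
    using cardpos unfolding Op_def by simp
  have nn: "\<And>x y. x \<in> V \<Longrightarrow> y \<in> nbrs V E x \<Longrightarrow> 0 \<le> W x y * (?M - h (take_type S x y))"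
    using le tt_sub'[OF S] by (auto intro!: mult_nonneg_nonneg W_nonneg dest: nbrsV)
  have uV: "u \<in> V" using u S by auto
  have "(\<Sum>y\<in>nbrs V E u. W u y * (?M - h (take_type S u y))) = 0"
    using Z finV nn uV by (subst (asm) sum_nonneg_eq_0_iff) (auto intro!: sum_nonneg)
  then have "W u v * (?M - h (take_type S u v)) = 0"
    using fin_nbrs nn uV v e by (subst (asm) sum_nonneg_eq_0_iff) (auto simp: nbrs_def)
  moreover have "W u v > 0" by (rule W_pos[OF uV v])
  ultimately have "h (take_type S u v) = ?M" by simp
  then show ?thesis using u by (simp add: take_type_def)
qed

lemma max_principle:
  assumes cut: "\<And>S. S \<subseteq> V \<Longrightarrow> S \<noteq> {} \<Longrightarrow> S \<noteq> V \<Longrightarrow> \<exists>u\<in>S. \<exists>v\<in>V - S. E u v"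
    and hfix: "\<And>S. S \<subseteq> V \<Longrightarrow> h S = Op h S" and h0: "h {} = 0" and hV: "h V = 0"
    and S: "S \<subseteq> V"
  shows "h S \<le> 0"
proof -
  define M where "M = Max (h ` Pow V)"
  have fin: "finite (h ` Pow V)" using finV by simp
  have le: "\<And>T. T \<subseteq> V \<Longrightarrow> h T \<le> M" unfolding M_def using fin by (intro Max_ge) auto
  have "M \<in> h ` Pow V" unfolding M_def using fin by (intro Max_in) auto
  then obtain S1 where S1: "S1 \<subseteq> V" "h S1 = M" by auto
  have claim: "\<And>T. T \<subseteq> V \<Longrightarrow> card (V - T) = k \<Longrightarrow> h T = M \<Longrightarrow> M \<le> 0" for k
  proof (induction k rule: less_induct)
    case (less k T)
    show ?case
    proof (cases "T = {} \<or> T = V")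
      case True then show ?thesis using less.prems h0 hV by auto
    next
      case False
      then obtain u v where u: "u \<in> T" and v: "v \<in> V - T" and e: "E u v" using cut[OF less.prems(1)] by blast
      have "h (insert v T) = h T"
        by (rule max_step[OF less.prems(1) hfix[OF less.prems(1)] _ u _ e]) (use le less.prems v in auto)
      moreover have "card (V - insert v T) < k"
      proof -
        have "V - insert v T = (V - T) - {v}" by auto
        moreover have "card ((V - T) - {v}) < card (V - T)" by (rule card_Diff1_less) (use finV v in auto)
        ultimately show ?thesis using less.prems(2) by simp
      qed
      moreover have "insert v T \<subseteq> V" using v less.prems(1) by auto
      ultimately show ?thesis using less.IH[of "card (V - insert v T)" "insert v T"] less.prems(3) by simp
    qed
  qed
  have "M \<le> 0" by (rule claim[OF S1(1) refl S1(2)])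
  then show ?thesis using le[OF S] by simp
qed

end

lemma cut_lemma:
  assumes cg: "connected_graph V E" and S: "S \<subseteq> V" "S \<noteq> {}" "S \<noteq> V"
  shows "\<exists>u\<in>S. \<exists>v\<in>V - S. E u v"
proof -
  obtain x where x: "x \<in> S" using S by auto
  obtain y where y: "y \<in> V" "y \<notin> S" using S by auto
  let ?P = "\<lambda>a b. E a b \<and> a \<in> V \<and> b \<in> V"
  have path: "?P\<^sup>*\<^sup>* x y" using cg x y S unfolding connected_graph_def by auto
  have gen: "?P\<^sup>*\<^sup>* a b \<Longrightarrow> a \<in> S \<Longrightarrow> b \<notin> S \<Longrightarrow> \<exists>u v. u \<in> S \<and> v \<notin> S \<and> ?P u v" for a b
  proof (induction rule: rtranclp_induct)
    case base then show ?case by simp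
  next
    case (step b c)
    show ?case
    proof (cases "b \<in> S")
      case True then show ?thesis using step by blast
    next
      case False then show ?thesis using step by blast
    qed
  qed
  from gen[OF path x y(2)] show ?thesis by blast
qed


context mgraph begin

lemma mart:
  assumes edge: "\<And>u v. u \<in> V \<Longrightarrow> v \<in> V \<Longrightarrow> F v * W u v = F u * W v u" and S: "S \<subseteq> V"
  shows "Op (\<lambda>T. \<Sum>x\<in>T. F x) S = (\<Sum>x\<in>S. F x)"
proof -
  let ?P = "\<lambda>T. \<Sum>x\<in>T. F x"
  define dl where "dl u v = (if u \<in> S \<and> v \<notin> S then F v else if u \<notin> S \<and> v \<in> S then - F v else 0)" for u v
  have finS: "finite S" using S finV finite_subset by blast
  have tt: "\<And>u v. ?P (take_type S u v) = ?P S + dl u v"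
    unfolding take_type_def dl_def using finS by (auto simp: sum.insert_if sum_diff1)
  define D where "D = (\<Sum>x\<in>V. \<Sum>y\<in>nbrs V E x. W x y * dl x y)"
  have "Op ?P S = (1 / real (card V)) * (\<Sum>x\<in>V. \<Sum>y\<in>nbrs V E x. W x y * ?P S) + (1 / real (card V)) * D"
    unfolding Op_def tt D_def by (simp add: distrib_left sum.distrib)
  also have "(1 / real (card V)) * (\<Sum>x\<in>V. \<Sum>y\<in>nbrs V E x. W x y * ?P S) = ?P S"
    using Op_const[of "?P S" S] unfolding Op_def .
  also have "D = 0"
  proof -
    have D2: "D = (\<Sum>x\<in>V. \<Sum>y\<in>nbrs V E x. W y x * dl y x)"
      unfolding D_def by (rule swap_nbrs[of "\<lambda>u v. W v u * dl v u"])
    have pair: "\<And>x y. x \<in> V \<Longrightarrow> y \<in> nbrs V E x \<Longrightarrow> W x y * dl x y + W y x * dl y x = 0"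
    proof -
      fix x y assume "x \<in> V" "y \<in> nbrs V E x"
      then have "F y * W x y = F x * W y x" using edge nbrsV by blast
      then show "W x y * dl x y + W y x * dl y x = 0" by (auto simp: dl_def algebra_simps)
    qed
    have "D + D = (\<Sum>x\<in>V. \<Sum>y\<in>nbrs V E x. W x y * dl x y + W y x * dl y x)"
      by (subst D2) (simp add: D_def sum.distrib)
    also have "\<dots> = 0" using pair by simp
    finally show ?thesis by simp
  qed
  finally show ?thesis by simp
qed

end

lemma pos_comb: "0 \<le> (lam::real) \<Longrightarrow> lam \<le> 1 \<Longrightarrow> 1 \<le> x \<Longrightarrow> 1 \<le> y \<Longrightarrow> 1 \<le> lam * x + (1 - lam) * y"
proof -
  assume a: "0 \<le> lam" "lam \<le> 1" "1 \<le> x" "1 \<le> y"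
  have "lam * 1 \<le> lam * x" using a by (intro mult_left_mono) auto
  moreover have "(1 - lam) * 1 \<le> (1 - lam) * y" using a by (intro mult_left_mono) auto
  ultimately show ?thesis by simp
qed

lemma edge_id:
  fixes lam a b :: real
  assumes "a > 0" "b > 0" "lam * b + (1 - lam) * a > 0"
  shows "(lam * a + (1 - lam) * b) / (lam * b + (1 - lam) * a) * (lam / a + (1 - lam) / b)
       = lam / b + (1 - lam) / a"
proof -
  have 1: "lam / a + (1 - lam) / b = (lam * b + (1 - lam) * a) / (a * b)"
    using assms by (simp add: field_simps)
  have 2: "lam / b + (1 - lam) / a = (lam * a + (1 - lam) * b) / (a * b)"
    using assms by (simp add: field_simps)
  show ?thesis unfolding 1 2 using assms by simp
qed

theorem mainTheorem10:
  fixes V :: "'a set" and E :: "'a \<Rightarrow> 'a \<Rightarrow> bool"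
    and d1 d2 :: nat and lam :: real and S0 :: "'a set" and f :: "nat \<Rightarrow> real"
  assumes "simple_graph V E" and "connected_graph V E"
    and "1 \<le> d1" and "d1 \<le> d2" and "bidegreed V E d1 d2"
    and "0 \<le> lam" and "lam \<le> 1"
    and "S0 \<subseteq> V"
    and "f d1 = 1"
    and "f d2 = (lam * real d1 + (1 - lam) * real d2) / (lam * real d2 + (1 - lam) * real d1)"
  shows "fp V E lam 1 S0 = (\<Sum>v\<in>S0. f (deg V E v)) / (\<Sum>v\<in>V. f (deg V E v))"
proof -
  note sg = assms(1) and cg = assms(2) and bd = assms(5)
  have degs: "\<And>v. v \<in> V \<Longrightarrow> deg V E v = d1 \<or> deg V E v = d2" using bd by (auto simp: bidegreed_def)
  have Vne: "V \<noteq> {}" using cg by (simp add: connected_graph_def)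
  interpret mgraph V E lam
  proof
    show "simple_graph V E" by fact
    show "\<And>v. v \<in> V \<Longrightarrow> 1 \<le> deg V E v" using degs assms(3,4) by fastforce
  qed (use assms Vne in auto)
  let ?F = "\<lambda>v. f (deg V E v)"
  have r1: "real d1 \<ge> 1" "real d2 \<ge> 1" using assms(3,4) by auto
  have N1: "lam * real d1 + (1 - lam) * real d2 \<ge> 1" by (rule pos_comb) (use assms r1 in auto)
  have D1: "lam * real d2 + (1 - lam) * real d1 \<ge> 1" by (rule pos_comb) (use assms r1 in auto)
  have fd2: "f d2 > 0" using N1 D1 assms(10) by simp
  have Fpos: "\<And>v. v \<in> V \<Longrightarrow> ?F v > 0" using degs fd2 assms(9) by fastforce
  have edge: "\<And>u v. u \<in> V \<Longrightarrow> v \<in> V \<Longrightarrow> ?F v * W u v = ?F u * W v u"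
  proof -
    fix u v assume u: "u \<in> V" and v: "v \<in> V"
    have e12: "f d2 * (lam / real d1 + (1 - lam) / real d2) = 1 * (lam / real d2 + (1 - lam) / real d1)"
      unfolding assms(10) using edge_id[of "real d1" "real d2" lam] r1 D1 by simp
    show "?F v * W u v = ?F u * W v u"
      using degs[OF u] degs[OF v] e12 assms(9) unfolding W_def by (auto simp: algebra_simps)
  qed
  define Phi where "Phi T = (\<Sum>x\<in>T. ?F x)" for T
  have PhiV: "Phi V > 0" unfolding Phi_def using Fpos Vne finV by (intro sum_pos) auto
  define h where "h S = Phi S / Phi V - ainf S" for S
  have hfix: "\<And>S. S \<subseteq> V \<Longrightarrow> h S = Op h S"
  proof -
    fix S assume S: "S \<subseteq> V"
    have eq: "h = (\<lambda>T. (1 / Phi V) * Phi T - ainf T)" unfolding h_def by auto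
    have "Op h S = Op (\<lambda>T. (1 / Phi V) * Phi T - ainf T) S" by (simp only: eq)
    also have "\<dots> = Op (\<lambda>T. (1 / Phi V) * Phi T) S - Op ainf S" by (rule Op_diff)
    also have "Op (\<lambda>T. (1 / Phi V) * Phi T) S = (1 / Phi V) * Op Phi S" by (rule Op_scale)
    also have "Op Phi S = Phi S" unfolding Phi_def by (rule mart[OF edge S])
    also have "Op ainf S = ainf S" using ainf_fix[OF S] by simp
    finally show "h S = Op h S" unfolding h_def by simp
  qed
  have cut: "\<And>S. S \<subseteq> V \<Longrightarrow> S \<noteq> {} \<Longrightarrow> S \<noteq> V \<Longrightarrow> \<exists>u\<in>S. \<exists>v\<in>V - S. E u v"
    using cut_lemma[OF cg] by blast
  have h0: "h {} = 0" unfolding h_def Phi_def by (simp add: ainf_empty)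
  have hV: "h V = 0" unfolding h_def using PhiV by (simp add: ainf_V)
  have le1: "h S0 \<le> 0" by (rule max_principle[OF cut hfix h0 hV assms(8)])
  have le2: "(\<lambda>S. - h S) S0 \<le> 0"
  proof (rule max_principle[OF cut _ _ _ assms(8)])
    fix S assume S: "S \<subseteq> V"
    have "Op (\<lambda>T. (-1) * h T) S = (-1) * Op h S" by (rule Op_scale)
    then have "Op (\<lambda>T. - h T) S = - Op h S" by simp
    then show "- h S = Op (\<lambda>T. - h T) S" using hfix[OF S] by simp
  qed (use h0 hV in auto)
  have "h S0 = 0" using le1 le2 by simp
  then have "ainf S0 = Phi S0 / Phi V" unfolding h_def by simp
  moreover have "fp V E lam 1 S0 = ainf S0" unfolding fp_def ainf_def ..
  ultimately show ?thesis unfolding Phi_def by simp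
qed

end
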